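(* Every pairwise social choice correspondence that satisfies strategyproofness, non-imposition, homogeneity, and neutrality is strongly Condorcet-consistent.
   Context: Let $A$ be a finite set of alternatives; a preference profile $R$ assigns a strict total order $\succ_i$ on $A$ to each voter $i$ of a finite non-empty electorate $N\subseteq\{1,2,\dots\}$; $\mathcal{R}^*(A)$ is the set of all profiles over all electorates. $g_R(x,y)=|\{i: x\succ_i y\}|-|\{i: y\succ_i x\}|$; $x\succ_R y$ iff $g_R(x,y)>0$. A Condorcet winner is $x$ with $x\succ_R y$ for all $y\ne x$. An SCC is $f:\mathcal{R}^*(A)\to 2^A\setminus\{\emptyset\}$; pairwise: $f(R)=f(R')$ whenever $g_R=g_{R'}$; non-imposing: for every $x\in A$ some profile has $f(R)=\{x\}$; neutral: for profiles $R,R'$ on the same electorate and a permutation $\pi$ of $A$ with $x\succ_i y\iff\pi(x)\succ'_i\pi(y)$ for all $x,y,i$, $f(R')=\pi(f(R))$; homogeneous: $f(kR)=f(R)$ for $k$ copies $kR$ of $R$; strongly Condorcet-consistent: $f(R)=\{x\}$ iff $x$ is the Condorcet winner in $R$. Fishburn's extension: for $X\ne Y$, $X\succ_i^F Y$ iff $x\succ_i y$ for all $x\in X\setminus Y,y\in Y$ and for all $x\in X,y\in Y\setminus X$; $f$ is strategyproof if no voter $i$ can change only his own preference to move from $R$ to $R'$ with $f(R')\succ_i^F f(R)$. *)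

theory Defs
  imports Main
begin

text \<open>A preference profile over alternatives A is a partial map from voters (positive
naturals) to preference relations; its domain is the (finite, non-empty) electorate.
A pair (x,y) in the relation of voter i means x \<succ>_i y.\<close>

type_synonym 'a profile = "nat \<Rightarrow> ('a \<times> 'a) set option"

definition strict_total_order :: "'a set \<Rightarrow> ('a \<times> 'a) set \<Rightarrow> bool" where
  "strict_total_order A r \<longleftrightarrow> r \<subseteq> A \<times> A \<and> irrefl r \<and> trans r \<and>
     (\<forall>x\<in>A. \<forall>y\<in>A. x \<noteq> y \<longrightarrow> (x, y) \<in> r \<or> (y, x) \<in> r)"

definition is_profile :: "'a set \<Rightarrow> 'a profile \<Rightarrow> bool" where
  "is_profile A R \<longleftrightarrow> finite (dom R) \<and> dom R \<noteq> {} \<and> 0 \<notin> dom R \<and>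
     (\<forall>i\<in>dom R. strict_total_order A (the (R i)))"

definition prefers :: "'a profile \<Rightarrow> nat \<Rightarrow> 'a \<Rightarrow> 'a \<Rightarrow> bool" where
  "prefers R i x y \<longleftrightarrow> i \<in> dom R \<and> (x, y) \<in> the (R i)"

definition margin :: "'a profile \<Rightarrow> 'a \<Rightarrow> 'a \<Rightarrow> int" where
  "margin R x y = int (card {i. prefers R i x y}) - int (card {i. prefers R i y x})"

definition condorcet_winner :: "'a set \<Rightarrow> 'a profile \<Rightarrow> 'a \<Rightarrow> bool" where
  "condorcet_winner A R x \<longleftrightarrow> x \<in> A \<and> (\<forall>y\<in>A. y \<noteq> x \<longrightarrow> margin R x y > 0)"

definition is_scc :: "'a set \<Rightarrow> ('a profile \<Rightarrow> 'a set) \<Rightarrow> bool" where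
  "is_scc A f \<longleftrightarrow> (\<forall>R. is_profile A R \<longrightarrow> f R \<noteq> {} \<and> f R \<subseteq> A)"

definition pairwise_scc :: "'a set \<Rightarrow> ('a profile \<Rightarrow> 'a set) \<Rightarrow> bool" where
  "pairwise_scc A f \<longleftrightarrow> (\<forall>R R'. is_profile A R \<longrightarrow> is_profile A R' \<longrightarrow>
     margin R = margin R' \<longrightarrow> f R = f R')"

definition non_imposing :: "'a set \<Rightarrow> ('a profile \<Rightarrow> 'a set) \<Rightarrow> bool" where
  "non_imposing A f \<longleftrightarrow> (\<forall>x\<in>A. \<exists>R. is_profile A R \<and> f R = {x})"

definition neutral :: "'a set \<Rightarrow> ('a profile \<Rightarrow> 'a set) \<Rightarrow> bool" where
  "neutral A f \<longleftrightarrow> (\<forall>R R' \<pi>. is_profile A R \<longrightarrow> is_profile A R' \<longrightarrow> dom R = dom R' \<longrightarrow>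
     bij_betw \<pi> A A \<longrightarrow>
     (\<forall>i\<in>dom R. \<forall>x\<in>A. \<forall>y\<in>A. prefers R i x y \<longleftrightarrow> prefers R' i (\<pi> x) (\<pi> y)) \<longrightarrow>
     f R' = \<pi> ` f R)"

definition copies :: "nat \<Rightarrow> 'a profile \<Rightarrow> 'a profile \<Rightarrow> bool" where
  "copies k R R' \<longleftrightarrow> (\<exists>h. (\<forall>j\<in>dom R'. h j \<in> dom R \<and> R' j = R (h j)) \<and>
     (\<forall>i\<in>dom R. card {j\<in>dom R'. h j = i} = k))"

definition homogeneous :: "'a set \<Rightarrow> ('a profile \<Rightarrow> 'a set) \<Rightarrow> bool" where
  "homogeneous A f \<longleftrightarrow> (\<forall>k R R'. k \<ge> 1 \<longrightarrow> is_profile A R \<longrightarrow> is_profile A R' \<longrightarrow>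
     copies k R R' \<longrightarrow> f R' = f R)"

definition strongly_condorcet_consistent :: "'a set \<Rightarrow> ('a profile \<Rightarrow> 'a set) \<Rightarrow> bool" where
  "strongly_condorcet_consistent A f \<longleftrightarrow> (\<forall>R x. is_profile A R \<longrightarrow>
     (f R = {x} \<longleftrightarrow> condorcet_winner A R x))"

definition fishburn :: "'a profile \<Rightarrow> nat \<Rightarrow> 'a set \<Rightarrow> 'a set \<Rightarrow> bool" where
  "fishburn R i X Y \<longleftrightarrow> X \<noteq> Y \<and> (\<forall>x\<in>X - Y. \<forall>y\<in>Y. prefers R i x y) \<and>
     (\<forall>x\<in>X. \<forall>y\<in>Y - X. prefers R i x y)"

definition strategyproof :: "'a set \<Rightarrow> ('a profile \<Rightarrow> 'a set) \<Rightarrow> bool" where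
  "strategyproof A f \<longleftrightarrow> (\<forall>R R' i. is_profile A R \<longrightarrow> is_profile A R' \<longrightarrow> i \<in> dom R \<longrightarrow>
     dom R' = dom R \<longrightarrow> (\<forall>j. j \<noteq> i \<longrightarrow> R' j = R j) \<longrightarrow> \<not> fishburn R i (f R') (f R))"

end

theory Submission
  imports Defs
begin

definition sv :: "('a \<times> 'a) set \<Rightarrow> 'a \<Rightarrow> 'a \<Rightarrow> int" where
  "sv r a b = (if (a,b) \<in> r then 1 else 0) - (if (b,a) \<in> r then 1 else 0)"

definition mg :: "('a \<times> 'a) set list \<Rightarrow> 'a \<Rightarrow> 'a \<Rightarrow> int" where
  "mg ps a b = sum_list (map (\<lambda>r. sv r a b) ps)"

definition PL :: "('a \<times> 'a) set list \<Rightarrow> 'a profile" where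
  "PL ps j = (if 1 \<le> j \<and> j \<le> length ps then Some (ps ! (j - 1)) else None)"

lemma sv_anti: "sv r a b = - sv r b a" by (simp add: sv_def)
lemma sv_refl[simp]: "sv r a a = 0" by (simp add: sv_def)
lemma mg_Nil[simp]: "mg [] a b = 0" by (simp add: mg_def)
lemma mg_Cons[simp]: "mg (r # xs) a b = sv r a b + mg xs a b" by (simp add: mg_def)
lemma mg_append[simp]: "mg (xs @ ys) a b = mg xs a b + mg ys a b" by (simp add: mg_def)
lemma mg_anti: "mg ps a b = - mg ps b a"
  by (induct ps) (auto simp: sv_anti[of _ a b])
lemma mg_refl[simp]: "mg ps a a = 0" by (induct ps) auto
lemma mg_replicate: "mg (replicate k r) a b = int k * sv r a b"
  by (induct k) (auto simp: algebra_simps)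
lemma mg_upt: "mg (map g [0..<M]) a b = (\<Sum>l<M. sv (g l) a b)"
  by (induct M) auto

lemma dom_PL: "dom (PL ps) = {1..length ps}"
  by (auto simp: PL_def split: if_splits)

lemma card_filter_int:
  assumes "finite S"
  shows "int (card {i\<in>S. P i}) = (\<Sum>i\<in>S. if P i then 1 else 0)"
  using assms by (simp add: sum.If_cases Int_def conj_commute)

lemma margin_sum:
  assumes "finite (dom R)"
  shows "margin R a b = (\<Sum>i\<in>dom R. sv (the (R i)) a b)"
proof -
  have 1: "{i. prefers R i a b} = {i\<in>dom R. (a,b) \<in> the (R i)}" by (auto simp: prefers_def)
  have 2: "{i. prefers R i b a} = {i\<in>dom R. (b,a) \<in> the (R i)}" by (auto simp: prefers_def)
  show ?thesis unfolding margin_def 1 2 card_filter_int[OF assms] sv_def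
    by (simp add: sum_subtractf)
qed

lemma margin_PL: "margin (PL ps) a b = mg ps a b"
proof -
  have "margin (PL ps) a b = (\<Sum>i\<in>{1..length ps}. sv (ps ! (i - 1)) a b)"
    by (simp add: margin_sum dom_PL PL_def)
  also have "\<dots> = (\<Sum>i<length ps. sv (ps ! i) a b)"
  proof -
    have "(\<Sum>i\<in>{1..length ps}. sv (ps ! (i - 1)) a b) = (\<Sum>i\<in>Suc ` {..<length ps}. sv (ps ! (i - 1)) a b)"
      using image_Suc_lessThan by simp
    also have "\<dots> = (\<Sum>i<length ps. sv (ps ! i) a b)"
      by (subst sum.reindex) auto
    finally show ?thesis .
  qed
  also have "\<dots> = mg ps a b"
    unfolding mg_def by (simp add: sum_list_sum_nth atLeast0LessThan)
  finally show ?thesis .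
qed

lemma margin_list:
  assumes "finite (dom R)"
  shows "margin R a b = mg (map (\<lambda>i. the (R i)) (sorted_list_of_set (dom R))) a b"
  using assms by (simp add: margin_sum mg_def sum_list_distinct_conv_sum_set)


lemma div_eq_iff_range: "0 < (k::nat) \<Longrightarrow> j div k = i \<longleftrightarrow> i*k \<le> j \<and> j < i*k+k"
  by (metis Nat.le_imp_diff_is_add add_diff_inverse_nat
    div_less_iff_less_mult div_times_less_eq_dividend le_add2 less_Suc_eq
    mult_Suc not_add_less2)

lemma card_div_eq: "0 < (k::nat) \<Longrightarrow> card {j. j div k = i} = k"
proof -
  assume k: "0 < k"
  have "{j. j div k = i} = {i*k..<i*k+k}" using div_eq_iff_range[OF k] by auto
  then show ?thesis by simp
qed

locale ctx =
  fixes A :: "'a set" and f :: "'a profile \<Rightarrow> 'a set"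
  assumes fin: "finite A"
    and scc: "is_scc A f"
    and pw: "pairwise_scc A f"
    and sp: "strategyproof A f"
    and ni: "non_imposing A f"
    and hom: "homogeneous A f"
    and neu: "neutral A f"
begin

definition valid :: "('a \<times> 'a) set list \<Rightarrow> bool" where
  "valid ps \<longleftrightarrow> ps \<noteq> [] \<and> (\<forall>r\<in>set ps. strict_total_order A r)"

lemma is_profile_PL: "valid ps \<Longrightarrow> is_profile A (PL ps)"
  unfolding is_profile_def valid_def dom_PL
  by (auto simp: PL_def Suc_le_eq)

lemma f_PL_eq:
  assumes "valid ps" "valid qs" "\<And>a b. mg ps a b = mg qs a b"
  shows "f (PL ps) = f (PL qs)"
  using pw assms is_profile_PL unfolding pairwise_scc_def
  by (metis (no_types) ext margin_PL)

lemma profile_to_list: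
  assumes "is_profile A R"
  shows "\<exists>ps. valid ps \<and> f R = f (PL ps) \<and> (\<forall>a b. margin R a b = mg ps a b)"
proof -
  let ?ps = "map (\<lambda>i. the (R i)) (sorted_list_of_set (dom R))"
  have fd: "finite (dom R)" "dom R \<noteq> {}" "\<forall>i\<in>dom R. strict_total_order A (the (R i))"
    using assms by (auto simp: is_profile_def)
  have v: "valid ?ps" using fd by (auto simp: valid_def)
  have m: "\<forall>a b. margin R a b = mg ?ps a b" using margin_list[OF fd(1)] by blast
  have "f R = f (PL ?ps)"
    using pw assms is_profile_PL[OF v] m margin_PL unfolding pairwise_scc_def
    by (metis (no_types) ext)
  with v m show ?thesis by blast
qed

lemma hom_list:
  assumes v: "valid ps" and k: "k \<ge> 1" and vq: "valid qs"
    and m: "\<And>a b. mg qs a b = int k * mg ps a b"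
  shows "f (PL qs) = f (PL ps)"
proof -
  define R' where "R' = (\<lambda>j. PL ps (j div k))"
  have k0: "0 < k" using k by simp
  have domR': "dom R' = {j. j div k \<in> {1..length ps}}"
    unfolding R'_def using dom_PL[of ps] by auto
  have fin': "finite (dom R')"
  proof (rule finite_subset)
    show "dom R' \<subseteq> {..<k * (length ps + 1)}"
    proof
      fix j assume "j \<in> dom R'"
      hence "j div k < length ps + 1" unfolding domR' by auto
      thus "j \<in> {..<k * (length ps + 1)}" using div_less_iff_less_mult[OF k0]
        by (simp add: mult.commute)
    qed
  qed simp
  have np: "length ps \<ge> 1" using v by (auto simp: valid_def Suc_le_eq)
  have "k \<in> dom R'" unfolding domR' using k0 np by simp
  hence ne: "dom R' \<noteq> {}" by auto
  have z: "0 \<notin> dom R'" unfolding domR' by simp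
  have sto: "\<forall>i\<in>dom R'. strict_total_order A (the (R' i))"
    using is_profile_PL[OF v] unfolding R'_def is_profile_def by auto
  have pR': "is_profile A R'" using fin' ne z sto by (simp add: is_profile_def)
  have cp: "copies k (PL ps) R'"
    unfolding copies_def
  proof (intro exI[of _ "\<lambda>j. j div k"] conjI ballI)
    fix j assume "j \<in> dom R'" thus "j div k \<in> dom (PL ps)" unfolding R'_def by auto
  next
    fix j show "R' j = PL ps (j div k)" by (simp add: R'_def)
  next
    fix i assume "i \<in> dom (PL ps)"
    hence "{j \<in> dom R'. j div k = i} = {j. j div k = i}" unfolding R'_def by auto
    thus "card {j \<in> dom R'. j div k = i} = k" using card_div_eq[OF k0] by simp
  qed
  have fR': "f R' = f (PL ps)" using hom k is_profile_PL[OF v] pR' cp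
    unfolding homogeneous_def by blast
  have mR': "margin R' a b = int k * mg ps a b" for a b
  proof -
    have "margin R' a b = (\<Sum>j\<in>dom R'. sv (the (R' j)) a b)" by (rule margin_sum[OF fin'])
    also have "\<dots> = (\<Sum>i\<in>dom (PL ps). \<Sum>j\<in>{j\<in>dom R'. j div k = i}. sv (the (R' j)) a b)"
      by (rule sum.group[symmetric]) (use fin' domR' in \<open>auto simp: dom_PL\<close>)
    also have "\<dots> = (\<Sum>i\<in>dom (PL ps). int k * sv (the (PL ps i)) a b)"
    proof (rule sum.cong[OF refl])
      fix i assume i: "i \<in> dom (PL ps)"
      hence e: "{j\<in>dom R'. j div k = i} = {j. j div k = i}" unfolding R'_def by auto
      have "(\<Sum>j\<in>{j\<in>dom R'. j div k = i}. sv (the (R' j)) a b)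
           = (\<Sum>j\<in>{j. j div k = i}. sv (the (PL ps i)) a b)"
        unfolding e by (rule sum.cong) (auto simp: R'_def)
      also have "\<dots> = int k * sv (the (PL ps i)) a b" using card_div_eq[OF k0] by simp
      finally show "(\<Sum>j\<in>{j\<in>dom R'. j div k = i}. sv (the (R' j)) a b) = int k * sv (the (PL ps i)) a b" .
    qed
    also have "\<dots> = int k * margin (PL ps) a b"
      by (simp add: margin_sum dom_PL sum_distrib_left)
    finally show ?thesis by (simp add: margin_PL)
  qed
  have "f (PL qs) = f R'"
    using pw is_profile_PL[OF vq] pR' unfolding pairwise_scc_def
    by (metis (no_types) ext margin_PL m mR')
  with fR' show ?thesis by simp
qed

end

context ctx
begin

definition top :: "'a \<Rightarrow> ('a \<times> 'a) set \<Rightarrow> bool" where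
  "top x r \<longleftrightarrow> (\<forall>z\<in>A - {x}. (x, z) \<in> r)"

definition bot :: "'a \<Rightarrow> ('a \<times> 'a) set \<Rightarrow> bool" where
  "bot x r \<longleftrightarrow> (\<forall>z\<in>A - {x}. (z, x) \<in> r)"

lemma PL_upd_other:
  assumes "j \<noteq> Suc (length ps)"
  shows "PL (ps @ b # cs) j = PL (ps @ a # cs) j"
proof -
  have "n \<noteq> length ps \<Longrightarrow> (ps @ b # cs) ! n = (ps @ a # cs) ! n" for n
    by (cases "n < length ps") (auto simp: nth_append nth_Cons')
  then show ?thesis using assms unfolding PL_def by auto
qed

lemma PL_at: "PL (ps @ b # cs) (Suc (length ps)) = Some b"
  by (simp add: PL_def)

lemma step:
  assumes v: "valid (ps @ a # cs)" and b: "strict_total_order A b"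
    and fx: "f (PL (ps @ a # cs)) = {x}" and c: "bot x a \<or> top x b"
  shows "f (PL (ps @ b # cs)) = {x}"
proof (rule ccontr)
  let ?R = "PL (ps @ a # cs)" and ?R' = "PL (ps @ b # cs)" and ?i = "Suc (length ps)"
  assume ne: "f ?R' \<noteq> {x}"
  have v': "valid (ps @ b # cs)" using v b by (auto simp: valid_def)
  have pR: "is_profile A ?R" and pR': "is_profile A ?R'" using v v' is_profile_PL by auto
  have dom: "dom ?R' = dom ?R" by (simp add: dom_PL)
  have i: "?i \<in> dom ?R" by (simp add: dom_PL)
  have oth: "\<forall>j. j \<noteq> ?i \<longrightarrow> ?R' j = ?R j" using PL_upd_other by blast
  have oth': "\<forall>j. j \<noteq> ?i \<longrightarrow> ?R j = ?R' j" using PL_upd_other by metis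
  have pa: "prefers ?R ?i u w \<longleftrightarrow> (u, w) \<in> a" for u w
    by (simp add: prefers_def PL_at dom_PL)
  have pb: "prefers ?R' ?i u w \<longleftrightarrow> (u, w) \<in> b" for u w
    by (simp add: prefers_def PL_at dom_PL)
  have Y: "f ?R' \<subseteq> A" "f ?R' \<noteq> {}" using scc pR' unfolding is_scc_def by auto
  show False using c
  proof
    assume ba: "bot x a"
    have "\<not> fishburn ?R ?i (f ?R') (f ?R)"
      using sp pR pR' i dom oth unfolding strategyproof_def by blast
    moreover have "fishburn ?R ?i (f ?R') (f ?R)"
      unfolding fx fishburn_def pa using ne ba Y(1) unfolding bot_def by auto
    ultimately show False by blast
  next
    assume tb: "top x b"
    have "\<not> fishburn ?R' ?i (f ?R) (f ?R')"
      using sp pR pR' i dom oth' unfolding strategyproof_def by (metis dom)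
    moreover have "fishburn ?R' ?i (f ?R) (f ?R')"
      unfolding fx fishburn_def pb using ne tb Y unfolding top_def by auto
    ultimately show False by blast
  qed
qed

lemma walk:
  assumes "list_all2 (\<lambda>a b. strict_total_order A b \<and> (bot x a \<or> top x b)) as bs"
  shows "valid (ps @ as @ cs) \<Longrightarrow> f (PL (ps @ as @ cs)) = {x} \<Longrightarrow> f (PL (ps @ bs @ cs)) = {x}"
  using assms
proof (induction as bs arbitrary: ps rule: list_all2_induct)
  case Nil
  then show ?case by simp
next
  case (Cons a as b bs)
  have 1: "f (PL (ps @ b # (as @ cs))) = {x}"
    using step[of ps a "as @ cs" b x] Cons by auto
  have 2: "valid ((ps @ [b]) @ as @ cs)" using Cons by (auto simp: valid_def)
  show ?case using Cons.IH[OF 2] 1 by simp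
qed

end

context ctx
begin

definition layered :: "('a \<times> 'a) set \<Rightarrow> ('a \<Rightarrow> nat) \<Rightarrow> ('a \<times> 'a) set" where
  "layered r lev = {(a, b). a \<in> A \<and> b \<in> A \<and> (lev a < lev b \<or> (lev a = lev b \<and> (a, b) \<in> r))}"

lemma sto_layered:
  assumes "strict_total_order A r"
  shows "strict_total_order A (layered r lev)"
proof -
  have r: "r \<subseteq> A \<times> A" "irrefl r" "trans r" "\<forall>x\<in>A. \<forall>y\<in>A. x \<noteq> y \<longrightarrow> (x, y) \<in> r \<or> (y, x) \<in> r"
    using assms unfolding strict_total_order_def by auto
  have 1: "layered r lev \<subseteq> A \<times> A" unfolding layered_def by auto
  have 2: "irrefl (layered r lev)" using r(2) unfolding layered_def irrefl_def by auto
  have 3: "trans (layered r lev)"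
  proof (rule transI)
    fix a b c assume ab: "(a, b) \<in> layered r lev" and bc: "(b, c) \<in> layered r lev"
    show "(a, c) \<in> layered r lev"
      using ab bc r(3) unfolding layered_def trans_def by auto
  qed
  have 4: "\<forall>a\<in>A. \<forall>b\<in>A. a \<noteq> b \<longrightarrow> (a, b) \<in> layered r lev \<or> (b, a) \<in> layered r lev"
    using r(4) unfolding layered_def by (auto simp: nat_neq_iff)
  show ?thesis using 1 2 3 4 unfolding strict_total_order_def by blast
qed

lemma sto_asym: "strict_total_order A r \<Longrightarrow> (a, b) \<in> r \<Longrightarrow> (b, a) \<notin> r"
  unfolding strict_total_order_def irrefl_def trans_def by blast

lemma sv_sto:
  assumes "strict_total_order A r" "a \<in> A" "b \<in> A" "a \<noteq> b"
  shows "sv r a b = (if (a, b) \<in> r then 1 else -1)"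
  using assms sto_asym[OF assms(1)] unfolding sv_def strict_total_order_def by auto

lemma sv_out:
  assumes "strict_total_order A r" "a \<notin> A \<or> b \<notin> A"
  shows "sv r a b = 0"
  using assms unfolding sv_def strict_total_order_def by auto

lemma sv_layered:
  assumes "strict_total_order A r" "a \<in> A" "b \<in> A" "a \<noteq> b"
  shows "sv (layered r lev) a b = (if lev a < lev b then 1 else if lev b < lev a then -1 else sv r a b)"
  using assms sv_sto[OF assms] sv_sto[OF sto_layered[OF assms(1)] assms(2-4), of lev]
  unfolding layered_def by auto

lemma sto_converse: "strict_total_order A r \<Longrightarrow> strict_total_order A (r\<inverse>)"
  unfolding strict_total_order_def irrefl_def trans_def by blast

lemma sv_converse[simp]: "sv (r\<inverse>) a b = - sv r a b"
  by (simp add: sv_def)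

lemma mg_converse: "mg (map converse xs) a b = - mg xs a b"
  by (induct xs) auto

lemma ex_sto: "\<exists>r. strict_total_order A r"
proof (cases "A = {}")
  case True
  then show ?thesis by (intro exI[of _ "{}"]) (auto simp: strict_total_order_def irrefl_def trans_def)
next
  case False
  then obtain x where x: "x \<in> A" by auto
  then obtain R where R: "is_profile A R" using ni unfolding non_imposing_def by blast
  then have "dom R \<noteq> {}" unfolding is_profile_def by auto
  then obtain i where "i \<in> dom R" by blast
  then show ?thesis using R unfolding is_profile_def by blast
qed

definition r0 :: "('a \<times> 'a) set" where "r0 = (SOME r. strict_total_order A r)"

lemma sto_r0: "strict_total_order A r0"
  unfolding r0_def using ex_sto by (rule someI_ex)

definition dn :: "'a \<Rightarrow> 'a set \<Rightarrow> ('a \<times> 'a) set" where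
  "dn x D = layered r0 (\<lambda>a. if a = x then 2 else if a \<in> D then 1 else 0)"

definition up :: "'a \<Rightarrow> 'a set \<Rightarrow> ('a \<times> 'a) set" where
  "up x D = layered r0 (\<lambda>a. if a = x then 1 else if a \<in> D then 2 else 0)"

definition down :: "'a \<Rightarrow> ('a \<times> 'a) set \<Rightarrow> ('a \<times> 'a) set" where
  "down x r = layered r (\<lambda>a. if a = x then 1 else 0)"

lemma sto_dn: "strict_total_order A (dn x D)"
  unfolding dn_def by (rule sto_layered[OF sto_r0])
lemma sto_up: "strict_total_order A (up x D)"
  unfolding up_def by (rule sto_layered[OF sto_r0])
lemma sto_down: "strict_total_order A r \<Longrightarrow> strict_total_order A (down x r)"
  unfolding down_def by (rule sto_layered)

lemma bot_dn: "x \<in> A \<Longrightarrow> bot x (dn x D)"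
  unfolding bot_def dn_def layered_def by auto
lemma top_conv_dn: "x \<in> A \<Longrightarrow> top x ((dn x D)\<inverse>)"
  unfolding top_def dn_def layered_def by auto
lemma bot_down: "x \<in> A \<Longrightarrow> bot x (down x r)"
  unfolding bot_def down_def layered_def by auto

lemma sv_up_dn:
  assumes "D \<subseteq> A - {x}" "x \<in> A"
  shows "sv (up x D) a b = sv (dn x D) a b +
     (if a = x \<and> b \<in> D then 2 else if b = x \<and> a \<in> D then -2 else 0)"
proof (cases "a \<in> A \<and> b \<in> A \<and> a \<noteq> b")
  case True
  then show ?thesis unfolding up_def dn_def using assms
    by (simp add: sv_layered[OF sto_r0]) auto
next
  case False
  then show ?thesis using assms
    sv_out[OF sto_up, of a b x D] sv_out[OF sto_dn, of a b x D] by auto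
qed

lemma sv_down_nx:
  assumes "strict_total_order A r" "a \<noteq> x" "b \<noteq> x"
  shows "sv (down x r) a b = sv r a b"
proof (cases "a \<in> A \<and> b \<in> A \<and> a \<noteq> b")
  case True
  then show ?thesis unfolding down_def using assms by (simp add: sv_layered)
next
  case False
  then show ?thesis using assms sv_out[OF assms(1), of a b] sv_out[OF sto_down[OF assms(1)], of a b x]
    by auto
qed

lemma sv_down_x:
  assumes "strict_total_order A r" "x \<in> A"
  shows "sv (down x r) x b = (if b \<in> A - {x} then -1 else 0)"
proof (cases "b \<in> A \<and> b \<noteq> x")
  case True
  then have "x \<noteq> b" by auto
  then show ?thesis unfolding down_def using True assms
    sv_layered[OF assms(1) assms(2), of b "\<lambda>a. if a = x then 1 else 0"] by simp
next
  case False
  then show ?thesis using assms sv_out[OF sto_down[OF assms(1)], of x b x] by auto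
qed

lemma mg_down_nx:
  assumes "\<forall>r\<in>set qs. strict_total_order A r" "a \<noteq> x" "b \<noteq> x"
  shows "mg (map (down x) qs) a b = mg qs a b"
  using assms by (induct qs) (auto simp: sv_down_nx)

lemma mg_down_x:
  assumes "\<forall>r\<in>set qs. strict_total_order A r" "x \<in> A"
  shows "mg (map (down x) qs) x b = - int (length qs) * (if b \<in> A - {x} then 1 else 0)"
  using assms by (induct qs) (auto simp: sv_down_x algebra_simps)

end

lemma mg_concat_replicate: "mg (concat (replicate k ps)) a b = int k * mg ps a b"
  by (induct k) (auto simp: algebra_simps)

lemma sum_thresh: "(\<Sum>l<M. if l < K then (2::int) else 0) = 2 * int (min K M)"
  by (induct M) auto

context ctx
begin

lemma valid_concat_replicate: "valid ps \<Longrightarrow> k \<ge> 1 \<Longrightarrow> valid (concat (replicate k ps))"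
  unfolding valid_def by (cases k) auto

lemma all_top:
  assumes x: "x \<in> A" and v: "valid ps" and t: "\<forall>r\<in>set ps. top x r"
  shows "f (PL ps) = {x}"
proof -
  obtain R0 where R0: "is_profile A R0" "f R0 = {x}" using ni x unfolding non_imposing_def by blast
  obtain ps0 where ps0: "valid ps0" "f R0 = f (PL ps0)" using profile_to_list[OF R0(1)] by blast
  define n0 where "n0 = length ps0"
  define m where "m = length ps"
  have n0: "n0 \<ge> 1" using ps0(1) unfolding n0_def valid_def by (cases ps0) auto
  have m: "m \<ge> 1" using v unfolding m_def valid_def by (cases ps) auto
  let ?ps0' = "concat (replicate m ps0)" and ?ps' = "concat (replicate n0 ps)"
  have v0': "valid ?ps0'" using valid_concat_replicate[OF ps0(1) m] .
  have v': "valid ?ps'" using valid_concat_replicate[OF v n0] .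
  have "f (PL ?ps0') = f (PL ps0)"
    by (rule hom_list[OF ps0(1) m v0']) (rule mg_concat_replicate)
  hence f0': "f (PL ?ps0') = {x}" using R0(2) ps0(2) by simp
  have len: "length ?ps0' = length ?ps'" by (simp add: length_concat n0_def m_def sum_list_replicate)
  have la: "list_all2 (\<lambda>a b. strict_total_order A b \<and> (bot x a \<or> top x b)) ?ps0' ?ps'"
  proof (rule list_all2_all_nthI[OF len])
    fix n assume "n < length ?ps0'"
    hence "?ps' ! n \<in> set ?ps'" using len by (metis nth_mem)
    hence "?ps' ! n \<in> set ps" by (cases n0) auto
    thus "strict_total_order A (?ps' ! n) \<and> (bot x (?ps0' ! n) \<or> top x (?ps' ! n))"
      using v t unfolding valid_def by auto
  qed
  have "f (PL ?ps') = {x}" using walk[OF la, of "[]" "[]"] v0' f0' by simp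
  moreover have "f (PL ?ps') = f (PL ps)"
    by (rule hom_list[OF v n0 v']) (rule mg_concat_replicate)
  ultimately show ?thesis by simp
qed

lemma raise:
  assumes x: "x \<in> A" and v: "valid ps" and fx: "f (PL ps) = {x}" and kM: "\<forall>z. k z \<le> M"
  shows "\<exists>qs. valid qs \<and> f (PL qs) = {x} \<and> length qs = length ps + 2 * M \<and>
     (\<forall>b. mg qs x b = mg ps x b + (if b \<in> A - {x} then 2 * int (k b) else 0)) \<and>
     (\<forall>a b. a \<noteq> x \<longrightarrow> b \<noteq> x \<longrightarrow> mg qs a b = mg ps a b)"
proof -
  define D where "D l = {z\<in>A - {x}. l < k z}" for l
  have DA: "D l \<subseteq> A - {x}" for l unfolding D_def by auto
  let ?as = "map (\<lambda>l. dn x (D l)) [0..<M]"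
  let ?bs = "map (\<lambda>l. up x (D l)) [0..<M]"
  let ?cs = "map converse ?as"
  have v0: "valid (ps @ ?as @ ?cs)" using v sto_dn sto_converse[OF sto_dn] unfolding valid_def by auto
  have v1: "valid (ps @ ?bs @ ?cs)" using v sto_up sto_converse[OF sto_dn] unfolding valid_def by auto
  have "f (PL (ps @ ?as @ ?cs)) = f (PL ps)"
    by (rule f_PL_eq[OF v0 v]) (simp del: map_map add: mg_converse)
  hence f0: "f (PL (ps @ ?as @ ?cs)) = {x}" using fx by simp
  have la: "list_all2 (\<lambda>a b. strict_total_order A b \<and> (bot x a \<or> top x b)) ?as ?bs"
    by (rule list_all2_all_nthI) (auto simp: sto_up bot_dn x)
  have f1: "f (PL (ps @ ?bs @ ?cs)) = {x}" using walk[OF la v0 f0] .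
  have mgq: "mg (ps @ ?bs @ ?cs) a b = mg ps a b +
      (\<Sum>l<M. if a = x \<and> b \<in> D l then 2 else if b = x \<and> a \<in> D l then -2 else 0)" for a b
  proof -
    have "mg (ps @ ?bs @ ?cs) a b = mg ps a b + (\<Sum>l<M. sv (up x (D l)) a b) - (\<Sum>l<M. sv (dn x (D l)) a b)"
      by (simp del: map_map add: mg_converse mg_upt)
    also have "\<dots> = mg ps a b + (\<Sum>l<M. sv (up x (D l)) a b - sv (dn x (D l)) a b)"
      by (simp add: sum_subtractf)
    also have "\<dots> = mg ps a b +
      (\<Sum>l<M. if a = x \<and> b \<in> D l then 2 else if b = x \<and> a \<in> D l then -2 else 0)"
      using sv_up_dn[OF DA x] by simp
    finally show ?thesis .
  qed
  have r1: "mg (ps @ ?bs @ ?cs) x b = mg ps x b + (if b \<in> A - {x} then 2 * int (k b) else 0)" for b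
  proof -
    have "(\<Sum>l<M. if x = x \<and> b \<in> D l then 2 else if b = x \<and> x \<in> D l then -2 else (0::int))
        = (if b \<in> A - {x} then (\<Sum>l<M. if l < k b then 2 else 0) else 0)"
      using DA unfolding D_def by (auto intro!: sum.cong)
    also have "\<dots> = (if b \<in> A - {x} then 2 * int (k b) else 0)"
      using sum_thresh[where M=M and K="k b"] kM by (simp add: min_def)
    finally show ?thesis using mgq[of x b] by simp
  qed
  have r2: "mg (ps @ ?bs @ ?cs) a b = mg ps a b" if "a \<noteq> x" "b \<noteq> x" for a b
    using mgq[of a b] that by simp
  show ?thesis
    by (rule exI[of _ "ps @ ?bs @ ?cs"]) (use v1 f1 r1 r2 in auto)
qed

lemma xcore:
  assumes x: "x \<in> A" and v: "valid W" and fx: "f (PL W) = {x}" and vq: "valid qs"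
    and len: "length qs = length W"
  shows "valid (W @ map (down x) qs @ map converse (map (down x) W)) \<and>
     f (PL (W @ map (down x) qs @ map converse (map (down x) W))) = {x} \<and>
     (\<forall>b. mg (W @ map (down x) qs @ map converse (map (down x) W)) x b = mg W x b) \<and>
     (\<forall>a b. a \<noteq> x \<longrightarrow> b \<noteq> x \<longrightarrow> mg (W @ map (down x) qs @ map converse (map (down x) W)) a b = mg qs a b)"
proof -
  let ?as = "map (down x) W" and ?bs = "map (down x) qs"
  let ?cs = "map converse ?as"
  have sW: "\<forall>r\<in>set W. strict_total_order A r" and sq: "\<forall>r\<in>set qs. strict_total_order A r"
    using v vq unfolding valid_def by auto
  have v0: "valid (W @ ?as @ ?cs)" using v sW sto_down sto_converse unfolding valid_def by auto
  have v1: "valid (W @ ?bs @ ?cs)" using v sW sq sto_down sto_converse unfolding valid_def by auto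
  have "f (PL (W @ ?as @ ?cs)) = f (PL W)"
    by (rule f_PL_eq[OF v0 v]) (simp del: map_map add: mg_converse)
  hence f0: "f (PL (W @ ?as @ ?cs)) = {x}" using fx by simp
  have la: "list_all2 (\<lambda>a b. strict_total_order A b \<and> (bot x a \<or> top x b)) ?as ?bs"
    by (rule list_all2_all_nthI) (use len sq in \<open>auto simp: sto_down bot_down x\<close>)
  have f1: "f (PL (W @ ?bs @ ?cs)) = {x}" using walk[OF la v0 f0] .
  have r1: "mg (W @ ?bs @ ?cs) x b = mg W x b" for b
    using mg_down_x[OF sW x] mg_down_x[OF sq x] len by (simp del: map_map add: mg_converse)
  have r2: "mg (W @ ?bs @ ?cs) a b = mg qs a b" if "a \<noteq> x" "b \<noteq> x" for a b
    using mg_down_nx[OF sW that] mg_down_nx[OF sq that] by (simp del: map_map add: mg_converse)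
  show ?thesis using v1 f1 r1 r2 by blast
qed

lemma lemX:
  assumes x: "x \<in> A" and v: "valid W" and fx: "f (PL W) = {x}" and vq: "valid qs"
    and len: "length qs = length W" and row: "\<forall>b. mg qs x b = mg W x b"
  shows "f (PL qs) = {x}"
proof -
  let ?Z = "W @ map (down x) qs @ map converse (map (down x) W)"
  note c = xcore[OF x v fx vq len]
  have "mg ?Z a b = mg qs a b" for a b
  proof (cases "a = x")
    case True then show ?thesis using c row by simp
  next
    case False
    show ?thesis
    proof (cases "b = x")
      case True
      then show ?thesis using c row mg_anti[of ?Z a b] mg_anti[of qs a b] by simp
    next
      case False
      then show ?thesis using c \<open>a \<noteq> x\<close> by simp
    qed
  qed
  hence "f (PL ?Z) = f (PL qs)" using f_PL_eq c vq by blast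
  thus ?thesis using c by simp
qed

end

lemma ar1: "even (w + int n) \<Longrightarrow> (w::int) > 0 \<Longrightarrow> even n \<Longrightarrow> w \<ge> 2 \<and> even (w - 2)"
  by presburger
lemma ar2: "even (w + int n) \<Longrightarrow> (w::int) > 0 \<Longrightarrow> odd n \<Longrightarrow> w \<ge> 1 \<and> even (w - 1)"
  by presburger
lemma ar3: "even ((w::int) + int n) \<Longrightarrow> even (w - int c) \<Longrightarrow> even (int n - int c)"
  by presburger
lemma ar4: "(w::int) \<le> int (c + 2*m) \<Longrightarrow> nat ((w - int c) div 2) \<le> m"
  by linarith
lemma ar5: "int c \<le> (w::int) \<Longrightarrow> even (w - int c) \<Longrightarrow> w = int c + 2 * int (nat ((w - int c) div 2))"
  by auto

definition sw :: "'a \<Rightarrow> 'a \<Rightarrow> 'a \<Rightarrow> 'a" where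
  "sw x y a = (if a = x then y else if a = y then x else a)"

definition pimg :: "'a \<Rightarrow> 'a \<Rightarrow> ('a \<times> 'a) set \<Rightarrow> ('a \<times> 'a) set" where
  "pimg x y r = (\<lambda>(a, b). (sw x y a, sw x y b)) ` r"

lemma sw_sw[simp]: "sw x y (sw x y a) = a" by (simp add: sw_def)

lemma mem_pimg: "(a, b) \<in> pimg x y r \<longleftrightarrow> (sw x y a, sw x y b) \<in> r"
proof
  assume "(a, b) \<in> pimg x y r"
  then obtain u v where "(u, v) \<in> r" "a = sw x y u" "b = sw x y v" unfolding pimg_def by auto
  thus "(sw x y a, sw x y b) \<in> r" by simp
next
  assume "(sw x y a, sw x y b) \<in> r"
  hence "(sw x y (sw x y a), sw x y (sw x y b)) \<in> pimg x y r" unfolding pimg_def by force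
  thus "(a, b) \<in> pimg x y r" by simp
qed

lemma sv_pimg: "sv (pimg x y r) a b = sv r (sw x y a) (sw x y b)"
  by (simp add: sv_def mem_pimg)

lemma mg_pimg: "mg (map (pimg x y) qs) a b = mg qs (sw x y a) (sw x y b)"
  by (induct qs) (auto simp: sv_pimg)

lemma PL_map: "PL (map g Z) i = map_option g (PL Z i)"
  by (auto simp: PL_def)

lemma prefers_pimg:
  "prefers (PL Z) i a b \<longleftrightarrow> prefers (PL (map (pimg x y) Z)) i (sw x y a) (sw x y b)"
  unfolding prefers_def PL_map by (cases "PL Z i") (auto simp: mem_pimg)

context ctx
begin

lemma sw_A: "x \<in> A \<Longrightarrow> y \<in> A \<Longrightarrow> a \<in> A \<Longrightarrow> sw x y a \<in> A"
  by (simp add: sw_def)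

lemma sto_pimg:
  assumes "strict_total_order A r" "x \<in> A" "y \<in> A"
  shows "strict_total_order A (pimg x y r)"
proof -
  have r: "r \<subseteq> A \<times> A" "irrefl r" "trans r" "\<forall>a\<in>A. \<forall>b\<in>A. a \<noteq> b \<longrightarrow> (a, b) \<in> r \<or> (b, a) \<in> r"
    using assms unfolding strict_total_order_def by auto
  have 1: "pimg x y r \<subseteq> A \<times> A"
  proof
    fix p assume "p \<in> pimg x y r"
    then obtain a b where p: "p = (a, b)" and "(sw x y a, sw x y b) \<in> r"
      by (metis mem_pimg surj_pair)
    hence "sw x y a \<in> A" "sw x y b \<in> A" using r(1) by auto
    hence "sw x y (sw x y a) \<in> A" "sw x y (sw x y b) \<in> A" using sw_A assms by blast+
    thus "p \<in> A \<times> A" using p by simp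
  qed
  have 2: "irrefl (pimg x y r)" using r(2) unfolding irrefl_def by (simp add: mem_pimg)
  have 3: "trans (pimg x y r)" using r(3) unfolding trans_def by (simp add: mem_pimg)
  have 4: "\<forall>a\<in>A. \<forall>b\<in>A. a \<noteq> b \<longrightarrow> (a, b) \<in> pimg x y r \<or> (b, a) \<in> pimg x y r"
  proof (intro ballI impI)
    fix a b assume "a \<in> A" "b \<in> A" "a \<noteq> b"
    hence "sw x y a \<in> A" "sw x y b \<in> A" "sw x y a \<noteq> sw x y b"
      using sw_A assms by (auto, metis sw_sw)
    thus "(a, b) \<in> pimg x y r \<or> (b, a) \<in> pimg x y r" using r(4) by (simp add: mem_pimg)
  qed
  show ?thesis using 1 2 3 4 unfolding strict_total_order_def by blast
qed

lemma mg_parity: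
  assumes "\<forall>r\<in>set qs. strict_total_order A r" "a \<in> A" "b \<in> A" "a \<noteq> b"
  shows "even (mg qs a b + int (length qs)) \<and> mg qs a b \<le> int (length qs)"
  using assms by (induct qs) (auto simp: sv_sto)

lemma mg_out:
  assumes "\<forall>r\<in>set qs. strict_total_order A r" "a \<notin> A \<or> b \<notin> A"
  shows "mg qs a b = 0"
  using assms by (induct qs) (auto simp: sv_out)

lemma dir1:
  assumes x: "x \<in> A" and v: "valid qs" and cw: "\<forall>z\<in>A - {x}. mg qs x z > 0"
  shows "f (PL qs) = {x}"
proof (cases "A - {x} = {}")
  case True
  have "f (PL qs) \<subseteq> A" "f (PL qs) \<noteq> {}" using scc is_profile_PL[OF v] unfolding is_scc_def by auto
  then show ?thesis using True x by auto
next
  case False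
  then obtain y0 where y0: "y0 \<in> A - {x}" by auto
  have sq: "\<forall>r\<in>set qs. strict_total_order A r" using v unfolding valid_def by auto
  define n where "n = length qs"
  define c :: nat where "c = (if even n then 2 else 1)"
  have par: "even (mg qs x z + int n) \<and> mg qs x z \<le> int n" if "z \<in> A - {x}" for z
    using mg_parity[OF sq x, of z] that unfolding n_def by auto
  have vc: "mg qs x z \<ge> int c \<and> even (mg qs x z - int c)" if "z \<in> A - {x}" for z
  proof -
    have p: "even (mg qs x z + int n)" "mg qs x z > 0" using par[OF that] cw that by auto
    show ?thesis
    proof (cases "even n")
      case True
      then have "c = 2" unfolding c_def by simp
      then show ?thesis using ar1[OF p(1) p(2) True] by simp
    next
      case False
      then have "c = 1" unfolding c_def by simp
      then show ?thesis using ar2[OF p(1) p(2) False] by simp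
    qed
  qed
  have cn: "c \<le> n" using vc[OF y0] par[OF y0] by simp
  have ce: "even (n - c)"
  proof -
    have p: "even (mg qs x y0 + int n)" "even (mg qs x y0 - int c)" using vc[OF y0] par[OF y0] by auto
    have "even (int n - int c)" using ar3[OF p] .
    moreover have "int (n - c) = int n - int c" using cn by simp
    ultimately show ?thesis by (metis even_of_nat_iff)
  qed
  define m where "m = (n - c) div 2"
  have nm: "n = c + 2 * m"
  proof -
    have "2 * m = n - c" unfolding m_def using ce by simp
    thus ?thesis using cn by simp
  qed
  define k where "k z = (if z \<in> A - {x} then nat ((mg qs x z - int c) div 2) else 0)" for z
  have kM: "\<forall>z. k z \<le> m"
  proof
    fix z show "k z \<le> m"
    proof (cases "z \<in> A - {x}")
      case True
      then show ?thesis using ar4[of "mg qs x z" c m] par[OF True] nm unfolding k_def by simp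
    qed (simp add: k_def)
  qed
  define e where "e = (dn x {})\<inverse>"
  have se: "strict_total_order A e" unfolding e_def by (rule sto_converse[OF sto_dn])
  have c1: "c \<ge> 1" unfolding c_def by auto
  have vps: "valid (replicate c e)" using se c1 unfolding valid_def by auto
  have fps: "f (PL (replicate c e)) = {x}"
    by (rule all_top[OF x vps]) (simp add: e_def top_conv_dn x)
  obtain W where W: "valid W" "f (PL W) = {x}" "length W = c + 2 * m"
    "\<forall>b. mg W x b = mg (replicate c e) x b + (if b \<in> A - {x} then 2 * int (k b) else 0)"
    using raise[OF x vps fps kM] by auto
  have row: "mg qs x b = mg W x b" for b
  proof (cases "b \<in> A - {x}")
    case True
    have "(x, b) \<in> e" using top_conv_dn[OF x] True unfolding e_def top_def by blast
    hence "sv e x b = 1" using sv_sto[OF se x, of b] True by auto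
    moreover have "mg qs x b = int c + 2 * int (k b)"
      using ar5[of c "mg qs x b"] vc[OF True] True unfolding k_def by simp
    ultimately show ?thesis using W(4) True by (simp add: mg_replicate)
  next
    case False
    have "sv e x b = 0" using False sv_out[OF se] by (cases "b = x") auto
    moreover have "mg qs x b = 0" using False mg_out[OF sq] by (cases "b = x") auto
    ultimately show ?thesis using W(4) False by (simp add: mg_replicate k_def)
  qed
  show ?thesis
  proof (rule lemX[OF x W(1) W(2) v])
    show "length qs = length W" using W(3) nm unfolding n_def by simp
    show "\<forall>b. mg qs x b = mg W x b" using row by simp
  qed
qed

lemma dir2:
  assumes x: "x \<in> A" and v: "valid qs" and fx: "f (PL qs) = {x}"
    and y: "y \<in> A" "y \<noteq> x" and neg: "mg qs x y \<le> 0"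
  shows False
proof -
  have v2: "valid (qs @ qs)" using v unfolding valid_def by auto
  have "f (PL (qs @ qs)) = f (PL qs)"
    by (rule hom_list[OF v _ v2, of 2]) auto
  hence f2: "f (PL (qs @ qs)) = {x}" using fx by simp
  define M where "M = nat (- mg qs x y)"
  define k where "k z = (if z = y then M else 0)" for z
  have kM: "\<forall>z. k z \<le> M" unfolding k_def by auto
  obtain Y1 where Y1: "valid Y1" "f (PL Y1) = {x}"
    "\<forall>b. mg Y1 x b = mg (qs @ qs) x b + (if b \<in> A - {x} then 2 * int (k b) else 0)"
    using raise[OF x v2 f2 kM] by auto
  have "mg Y1 x y = mg (qs @ qs) x y + 2 * int M" using Y1(3) y unfolding k_def by simp
  hence Y1y: "mg Y1 x y = 0" using neg unfolding M_def by simp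
  let ?pY = "map (pimg x y) Y1"
  have sY: "\<forall>r\<in>set Y1. strict_total_order A r" using Y1(1) unfolding valid_def by auto
  have vpY: "valid ?pY" using Y1(1) sY sto_pimg[OF _ x y(1)] unfolding valid_def by auto
  note c = xcore[OF x Y1(1) Y1(2) vpY length_map]
  let ?Z = "Y1 @ map (down x) ?pY @ map converse (map (down x) Y1)"
  have vZ: "valid ?Z" and fZ: "f (PL ?Z) = {x}" and rZ: "\<forall>b. mg ?Z x b = mg Y1 x b"
    and nZ: "\<forall>a b. a \<noteq> x \<longrightarrow> b \<noteq> x \<longrightarrow> mg ?Z a b = mg ?pY a b"
    using c by blast+
  let ?pZ = "map (pimg x y) ?Z"
  have sZ: "\<forall>r\<in>set ?Z. strict_total_order A r" using vZ unfolding valid_def by blast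
  have vpZ: "valid ?pZ" using vZ sZ sto_pimg[OF _ x y(1)] unfolding valid_def by auto
  have rowZ: "\<forall>b. mg ?pZ x b = mg ?Z x b"
  proof
    fix b
    have e: "mg ?pZ x b = mg ?Z y (sw x y b)" by (simp only: mg_pimg) (simp add: sw_def)
    show "mg ?pZ x b = mg ?Z x b"
    proof (cases "b = x")
      case True then show ?thesis using e by (simp add: sw_def)
    next
      case False
      show ?thesis
      proof (cases "b = y")
        case True
        then have "mg ?pZ x b = mg ?Z y x" using e by (simp add: sw_def)
        also have "\<dots> = - mg ?Z x y" by (rule mg_anti)
        also have "\<dots> = 0" using rZ Y1y by simp
        finally show ?thesis using rZ Y1y True by simp
      next
        case False
        then have "mg ?pZ x b = mg ?Z y b" using e \<open>b \<noteq> x\<close> by (simp add: sw_def)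
        also have "\<dots> = mg ?pY y b" using nZ y(2) \<open>b \<noteq> x\<close> by auto
        also have "\<dots> = mg Y1 x b" using False \<open>b \<noteq> x\<close> by (simp add: mg_pimg sw_def)
        finally show ?thesis using rZ by simp
      qed
    qed
  qed
  have fpZ: "f (PL ?pZ) = {x}"
    by (rule lemX[OF x vZ fZ vpZ _ rowZ]) simp
  have bij: "bij_betw (sw x y) A A"
    by (rule bij_betw_byWitness[where f' = "sw x y"]) (auto simp: sw_A x y(1))
  have pref: "\<forall>i\<in>dom (PL ?Z). \<forall>a\<in>A. \<forall>b\<in>A.
      prefers (PL ?Z) i a b \<longleftrightarrow> prefers (PL ?pZ) i (sw x y a) (sw x y b)"
    by (intro ballI) (rule prefers_pimg)
  have "f (PL ?pZ) = sw x y ` f (PL ?Z)"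
    using neu is_profile_PL[OF vZ] is_profile_PL[OF vpZ] bij pref
    unfolding neutral_def by (metis dom_PL length_map)
  hence "{x} = {y}" using fpZ fZ by (simp add: sw_def)
  thus False using y(2) by simp
qed

end

theorem lemma12:
  fixes A :: "'a set" and f :: "'a profile \<Rightarrow> 'a set"
  assumes "finite A"
    and "is_scc A f"
    and "pairwise_scc A f"
    and "strategyproof A f"
    and "non_imposing A f"
    and "homogeneous A f"
    and "neutral A f"
  shows "strongly_condorcet_consistent A f"
proof -
  interpret ctx A f using assms by unfold_locales
  show ?thesis unfolding strongly_condorcet_consistent_def
  proof (intro allI impI)
    fix R x assume R: "is_profile A R"
    obtain ps where ps: "valid ps" "f R = f (PL ps)" "\<forall>a b. margin R a b = mg ps a b"
      using profile_to_list[OF R] by blast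
    show "f R = {x} \<longleftrightarrow> condorcet_winner A R x"
    proof
      assume fx: "f R = {x}"
      have xA: "x \<in> A" using scc R fx unfolding is_scc_def by auto
      have "\<forall>y\<in>A. y \<noteq> x \<longrightarrow> margin R x y > 0"
      proof (intro ballI impI)
        fix y assume "y \<in> A" "y \<noteq> x"
        show "margin R x y > 0"
        proof (rule ccontr)
          assume "\<not> margin R x y > 0"
          thus False using dir2[OF xA ps(1) _ \<open>y \<in> A\<close> \<open>y \<noteq> x\<close>] fx ps by auto
        qed
      qed
      thus "condorcet_winner A R x" using xA unfolding condorcet_winner_def by blast
    next
      assume "condorcet_winner A R x"
      hence "x \<in> A" "\<forall>z\<in>A - {x}. mg ps x z > 0" using ps(3) unfolding condorcet_winner_def by auto
      thus "f R = {x}" using dir1 ps(1,2) by simp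
    qed
  qed
qed

end
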